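(* Let $f:H\to\mathbb{R}\cup\{+\infty\}$ be proper, lower semicontinuous, and have the K\L{} property at a global minimum $x^*$ of $f$. Fix $\underline a>0$ and $M>0$. Then there exist $\gamma>0$ and $\eta>0$ such that every sequence $(x^k)$ satisfying $\mathbf{H}_1$, $\mathbf{H}_2$, $\mathbf{H}_3$ with $\varepsilon_k=0$ for all $k$, $a_k\ge\underline a$ for all $k$, $\sup_{k\ge1}\frac{1}{a_kb_k}\le M$, and $x^0\in\underline{\Gamma}_\eta(x^*,\gamma)$, $f$-converges to a global minimum $\bar x$ of $f$ and satisfies $\sum_{k=0}^{+\infty}\|x^{k+1}-x^k\|<+\infty$.
   Context: Subdifferential $\partial f$ (limiting Fréchet), lazy slope $\|\partial f(x)\|_-=\inf_{p\in\partial f(x)}\|p\|$ ($+\infty$ if $\partial f(x)=\emptyset$), $f$-convergence ($x^k\to x$ and $f(x^k)\to f(x)$). A desingularizing function is a continuous concave $\varphi:[0,\eta_0[\to[0,+\infty[$ with $\varphi(0)=0$, $C^1$ on $]0,\eta_0[$ with $\varphi'>0$. $f$ has the K\L{} property at $x^*$ with desingularizing $\varphi$ if there is $\delta>0$ with $\varphi'(f(x)-f(x^* ))\|\partial f(x)\|_-\ge1$ for all $x\in\Gamma_{\eta_0}(x^*,\delta)=\{x:\|x-x^*\|<\delta,\ f(x^* )<f(x)<f(x^* )+\eta_0\}$. Relaxed local upper level set: $\underline{\Gamma}_\eta(x^*,\gamma)=\{x\in H:\|x-x^*\|<\gamma,\ f(x^* )\le f(x)<f(x^* )+\eta\}$.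 $\mathbf{H}_1$: $f(x^{k+1})+a_k\|x^{k+1}-x^k\|^2\le f(x^k)$, $a_k>0$. $\mathbf{H}_2$: $b_{k+1}\|\partial f(x^{k+1})\|_-\le\|x^{k+1}-x^k\|+\varepsilon_{k+1}$, $b_{k+1}>0$, $\varepsilon_{k+1}\ge0$. $\mathbf{H}_3$: (i) $a_k\ge\underline a>0$; (ii) $(b_k)\notin\ell^1$; (iii) $\sup_{k\ge1}\frac1{a_kb_k}<\infty$; (iv) $(\varepsilon_k)\in\ell^1$. *)

theory Defs
  imports "HOL-Analysis.Analysis"
begin

text \<open>Extended-real valued functions f : H \<rightarrow> \<real> \<union> {+\<infinity>} on a real Hilbert space H
  (type class real_inner + complete_space), encoded with values in ereal.\<close>

definition proper_fun :: "('a \<Rightarrow> ereal) \<Rightarrow> bool" where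
  "proper_fun f \<longleftrightarrow> (\<forall>x. f x \<noteq> -\<infinity>) \<and> (\<exists>x. f x \<noteq> \<infinity>)"

definition lsc_fun :: "('a::topological_space \<Rightarrow> ereal) \<Rightarrow> bool" where
  "lsc_fun f \<longleftrightarrow> (\<forall>x. f x \<le> Liminf (at x) f)"

text \<open>Frechet subdifferential: p \<in> \<partial>^f(x) iff f(x) finite and
  liminf_{y\<rightarrow>x, y\<noteq>x} (f y - f x - <p, y - x>)/|y - x| \<ge> 0 (written out).\<close>
definition frechet_subdiff :: "('a::real_inner \<Rightarrow> ereal) \<Rightarrow> 'a \<Rightarrow> 'a set" where
  "frechet_subdiff f x = {p. \<bar>f x\<bar> \<noteq> \<infinity> \<and>
     (\<forall>e>0. \<exists>d>0. \<forall>y. norm (y - x) < d \<longrightarrow>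
        f y \<ge> f x + ereal (inner p (y - x) - e * norm (y - x)))}"

definition limiting_subdiff :: "('a::real_inner \<Rightarrow> ereal) \<Rightarrow> 'a \<Rightarrow> 'a set" where
  "limiting_subdiff f x = {p. \<exists>xs ps. xs \<longlonglongrightarrow> x \<and> (\<lambda>n. f (xs n)) \<longlonglongrightarrow> f x \<and>
     (\<forall>n. ps n \<in> frechet_subdiff f (xs n)) \<and> ps \<longlonglongrightarrow> p}"

text \<open>Lazy slope: inf of norms of subgradients; +\<infinity> if the subdifferential is empty.\<close>
definition lazy_slope :: "('a::real_inner \<Rightarrow> ereal) \<Rightarrow> 'a \<Rightarrow> ereal" where
  "lazy_slope f x = Inf ((\<lambda>p. ereal (norm p)) ` limiting_subdiff f x)"

definition desingularizing :: "real \<Rightarrow> (real \<Rightarrow> real) \<Rightarrow> (real \<Rightarrow> real) \<Rightarrow> bool" where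
  "desingularizing \<eta>0 \<phi> \<phi>' \<longleftrightarrow> \<eta>0 > 0 \<and>
     continuous_on {0..<\<eta>0} \<phi> \<and> concave_on {0..<\<eta>0} \<phi> \<and> \<phi> 0 = 0 \<and>
     (\<forall>s\<in>{0..<\<eta>0}. \<phi> s \<ge> 0) \<and>
     (\<forall>s\<in>{0<..<\<eta>0}. (\<phi> has_real_derivative \<phi>' s) (at s) \<and> \<phi>' s > 0) \<and>
     continuous_on {0<..<\<eta>0} \<phi>'"

definition KL_at :: "('a::real_inner \<Rightarrow> ereal) \<Rightarrow> 'a \<Rightarrow> bool" where
  "KL_at f xs \<longleftrightarrow> (\<exists>\<eta>0 \<phi> \<phi>' \<delta>. desingularizing \<eta>0 \<phi> \<phi>' \<and> \<delta> > 0 \<and>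
     (\<forall>x. norm (x - xs) < \<delta> \<and> f xs < f x \<and> f x < f xs + ereal \<eta>0 \<longrightarrow>
        ereal (\<phi>' (real_of_ereal (f x - f xs))) * lazy_slope f x \<ge> 1))"

definition global_min :: "('a \<Rightarrow> ereal) \<Rightarrow> 'a \<Rightarrow> bool" where
  "global_min f xs \<longleftrightarrow> (\<forall>y. f xs \<le> f y)"

definition relaxed_level_set :: "('a::real_normed_vector \<Rightarrow> ereal) \<Rightarrow> 'a \<Rightarrow> real \<Rightarrow> real \<Rightarrow> 'a set" where
  "relaxed_level_set f xs \<eta> \<gamma> = {x. norm (x - xs) < \<gamma> \<and> f xs \<le> f x \<and> f x < f xs + ereal \<eta>}"

end

theory Submission
  imports Defs
begin


lemma concave_tangent:
  fixes g :: "real \<Rightarrow> real"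
  assumes "concave_on {0..<e} g" "c \<in> {0<..<e}" "y \<in> {0..<e}"
    "(g has_real_derivative g') (at c)"
  shows "g y \<le> g c + g' * (y - c)"
proof -
  have cv: "convex_on {0..<e} (\<lambda>x. - g x)" using assms(1) by (simp add: concave_on_def)
  have "((\<lambda>x. - g x) has_field_derivative - g') (at c within {0..<e})"
    using DERIV_minus[OF assms(4)] by (rule has_field_derivative_at_within)
  moreover have "connected {0..<e}" by (simp add: is_interval_connected)
  moreover have "c \<in> interior {0..<e}" using assms(2) by (simp add: interior_atLeastLessThan)
  ultimately have "(- g') * (y - c) \<le> (- g y) - (- g c)"
    using convex_on_imp_above_tangent[OF cv _ _ assms(3)] by blast
  then show ?thesis by (simp add: algebra_simps)
qed

lemma ereal_kl_step:
  fixes s :: ereal and p bb d :: real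
  assumes "1 \<le> ereal p * s" "ereal bb * s \<le> ereal d" "bb > 0" "p > 0" "s \<ge> 0"
  shows "bb \<le> p * d"
proof (cases s)
  case (real t)
  then have "1 \<le> p * t" "bb * t \<le> d" "t \<ge> 0" using assms by auto
  then have "bb * 1 \<le> bb * (p * t)" using assms(3) by (intro mult_left_mono) auto
  also have "\<dots> = p * (bb * t)" by simp
  also have "\<dots> \<le> p * d" using \<open>bb * t \<le> d\<close> assms(4) by (intro mult_left_mono) auto
  finally show ?thesis by simp
next
  case PInf
  then show ?thesis using assms(2,3) by simp
next
  case MInf
  then show ?thesis using assms(5) by simp
qed

lemma lazy_slope_nonneg: "lazy_slope f x \<ge> 0"
  unfolding lazy_slope_def by (auto intro!: Inf_greatest)

lemma amgm_step:
  fixes u v w :: real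
  assumes "u \<ge> 0" "v \<ge> 0" "w \<ge> 0" "u\<^sup>2 \<le> v * w"
  shows "2 * u \<le> v + w"
proof -
  have "0 \<le> (v - w)\<^sup>2" by simp
  then have "(2*u)\<^sup>2 \<le> (v + w)\<^sup>2"
    using assms(4) by (simp add: power2_eq_square algebra_simps)
  then show ?thesis by (rule power2_le_imp_le) (use assms in auto)
qed



theorem mainTheorem3:
  fixes f :: "'a::{real_inner, complete_space} \<Rightarrow> ereal" and xs :: 'a
    and a_low M :: real
  assumes "proper_fun f" and "lsc_fun f" and "global_min f xs" and "KL_at f xs"
    and "a_low > 0" and "M > 0"
  shows "\<exists>\<gamma>>0. \<exists>\<eta>>0. \<forall>(x :: nat \<Rightarrow> 'a) (a :: nat \<Rightarrow> real) (b :: nat \<Rightarrow> real).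
     (\<forall>k. a k > 0 \<and> f (x (Suc k)) + ereal (a k * (norm (x (Suc k) - x k))\<^sup>2) \<le> f (x k)) \<and>
     (\<forall>k. b (Suc k) > 0 \<and>
        ereal (b (Suc k)) * lazy_slope f (x (Suc k)) \<le> ereal (norm (x (Suc k) - x k) + 0)) \<and>
     (\<forall>k. a k \<ge> a_low) \<and>
     \<not> summable b \<and>
     (\<forall>k\<ge>1. 1 / (a k * b k) \<le> M) \<and>
     x 0 \<in> relaxed_level_set f xs \<eta> \<gamma>
     \<longrightarrow> (\<exists>xbar. global_min f xbar \<and> x \<longlonglongrightarrow> xbar \<and> (\<lambda>k. f (x k)) \<longlonglongrightarrow> f xbar \<and>
            summable (\<lambda>k. norm (x (Suc k) - x k)))"
proof -
  from assms(4) obtain \<eta>0 \<phi> \<phi>' \<delta> where des: "desingularizing \<eta>0 \<phi> \<phi>'" and \<delta>pos: "\<delta> > 0"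
    and KL: "\<forall>x. norm (x - xs) < \<delta> \<and> f xs < f x \<and> f x < f xs + ereal \<eta>0 \<longrightarrow>
        ereal (\<phi>' (real_of_ereal (f x - f xs))) * lazy_slope f x \<ge> 1"
    unfolding KL_at_def by blast
  from des have \<eta>0: "\<eta>0 > 0" and \<phi>cont: "continuous_on {0..<\<eta>0} \<phi>"
    and \<phi>conc: "concave_on {0..<\<eta>0} \<phi>" and \<phi>0: "\<phi> 0 = 0"
    and \<phi>nn: "\<forall>s\<in>{0..<\<eta>0}. \<phi> s \<ge> 0"
    and \<phi>der: "\<forall>s\<in>{0<..<\<eta>0}. (\<phi> has_real_derivative \<phi>' s) (at s) \<and> \<phi>' s > 0"
    and \<phi>'cont: "continuous_on {0<..<\<eta>0} \<phi>'"
    unfolding desingularizing_def by auto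
  have fxs1: "f xs \<noteq> -\<infinity>" using assms(1) unfolding proper_fun_def by auto
  obtain z where "f z \<noteq> \<infinity>" using assms(1) unfolding proper_fun_def by auto
  moreover have "f xs \<le> f z" using assms(3) unfolding global_min_def by auto
  ultimately have fxs2: "f xs \<noteq> \<infinity>" by auto
  define fs where "fs = real_of_ereal (f xs)"
  have fs: "f xs = ereal fs" using fxs1 fxs2 unfolding fs_def by (cases "f xs") auto
  have "\<exists>e>0. \<forall>s\<in>{0..<\<eta>0}. s < e \<longrightarrow> \<phi> s < \<delta>/(3*M)"
  proof -
    have "0 \<in> {0..<\<eta>0}" using \<eta>0 by simp
    with \<phi>cont have "\<forall>\<epsilon>>0. \<exists>d>0. \<forall>s\<in>{0..<\<eta>0}. dist s 0 < d \<longrightarrow> dist (\<phi> s) (\<phi> 0) < \<epsilon>"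
      unfolding continuous_on_iff by blast
    moreover have "\<delta>/(3*M) > 0" using \<delta>pos assms(6) by simp
    ultimately obtain d where "d>0" "\<forall>s\<in>{0..<\<eta>0}. dist s 0 < d \<longrightarrow> dist (\<phi> s) (\<phi> 0) < \<delta>/(3*M)"
      by blast
    then show ?thesis using \<phi>0 by (intro exI[of _ d]) (auto simp: dist_real_def)
  qed
  then obtain e where e: "e > 0" "\<forall>s\<in>{0..<\<eta>0}. s < e \<longrightarrow> \<phi> s < \<delta>/(3*M)" by blast
  define \<eta> where "\<eta> = min \<eta>0 (min e (a_low * \<delta>^2 / 36))"
  have \<eta>pos: "\<eta> > 0" using \<eta>0 e assms(5) \<delta>pos by (simp add: \<eta>_def)
  have \<eta>le: "\<eta> \<le> \<eta>0" "\<eta> \<le> e" "\<eta> \<le> a_low * \<delta>^2/36" by (auto simp: \<eta>_def)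
  have key: "\<exists>xbar. global_min f xbar \<and> x \<longlonglongrightarrow> xbar \<and> (\<lambda>k. f (x k)) \<longlonglongrightarrow> f xbar \<and>
            summable (\<lambda>k. norm (x (Suc k) - x k))"
    if H1: "\<forall>k. a k > 0 \<and> f (x (Suc k)) + ereal (a k * (norm (x (Suc k) - x k))\<^sup>2) \<le> f (x k)"
    and H2: "\<forall>k. b (Suc k) > 0 \<and>
        ereal (b (Suc k)) * lazy_slope f (x (Suc k)) \<le> ereal (norm (x (Suc k) - x k) + 0)"
    and H3a: "\<forall>k. a k \<ge> a_low" and H3b: "\<not> summable b"
    and H3c: "\<forall>k\<ge>1. 1 / (a k * b k) \<le> M"
    and x0: "x 0 \<in> relaxed_level_set f xs \<eta> (\<delta>/3)"
    for x :: "nat \<Rightarrow> 'a" and a b :: "nat \<Rightarrow> real"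
  proof -
    define F where "F k = real_of_ereal (f (x k))" for k
    define d where "d k = norm (x (Suc k) - x k)" for k
    define r where "r k = F k - fs" for k
    from x0 have x0n: "norm (x 0 - xs) < \<delta>/3" and x0l: "f (x 0) < f xs + ereal \<eta>"
      unfolding relaxed_level_set_def by auto
    have mono1: "f (x (Suc k)) \<le> f (x k)" for k
    proof -
      have apos0: "a k > 0" using H1 by auto
      have "0 \<le> ereal (a k * (norm (x (Suc k) - x k))\<^sup>2)" using apos0 by simp
      then have "f (x (Suc k)) \<le> f (x (Suc k)) + ereal (a k * (norm (x (Suc k) - x k))\<^sup>2)"
        by (rule add_increasing2) simp
      then show ?thesis using H1 by (meson order_trans)
    qed
    have mono: "f (x k) \<le> f (x 0)" for k
      by (induction k) (auto intro: order_trans[OF mono1])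
    have lowb: "f xs \<le> f (x k)" for k using assms(3) unfolding global_min_def by auto
    have Ffin: "f (x k) = ereal (F k)" for k
    proof -
      have "f (x k) < ereal (fs + \<eta>)" using mono[of k] x0l fs by auto
      moreover have "ereal fs \<le> f (x k)" using lowb[of k] fs by simp
      ultimately show ?thesis unfolding F_def by (cases "f (x k)") auto
    qed
    have Fge: "fs \<le> F k" for k using lowb[of k] Ffin[of k] fs by simp
    have F0: "F 0 < fs + \<eta>" using x0l Ffin[of 0] fs by simp
    have H1r: "F (Suc k) + a k * (d k)\<^sup>2 \<le> F k" for k
    proof -
      have "ereal (F (Suc k)) + ereal (a k * (d k)\<^sup>2) \<le> ereal (F k)"
        using H1 Ffin[of k] Ffin[of "Suc k"] unfolding d_def by metis
      then show ?thesis by simp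
    qed
    have apos: "a k > 0" for k using H1 by auto
    have dnn: "d k \<ge> 0" for k unfolding d_def by simp
    have rdec: "r (Suc k) \<le> r k" for k
    proof -
      have "0 \<le> a k * (d k)\<^sup>2" using apos[of k] by simp
      then show ?thesis using H1r[of k] unfolding r_def by linarith
    qed
    have rnn: "r k \<ge> 0" for k using Fge[of k] unfolding r_def by simp
    have rdecseq: "decseq r" using rdec by (rule decseq_SucI)
    have rle: "r k \<le> r j" if "j \<le> k" for j k using rdecseq that by (simp add: decseq_def)
    have rlt: "r k < \<eta>" for k using rle[of 0 k] F0 unfolding r_def by simp
    have rI: "r k \<in> {0..<\<eta>0}" for k using rnn[of k] rlt[of k] \<eta>le by auto
    have \<phi>nnk: "\<phi> (r k) \<ge> 0" for k using \<phi>nn rI by auto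
    have \<phi>sm: "\<phi> (r k) < \<delta>/(3*M)" for k using e(2) rI[of k] rlt[of k] \<eta>le by auto
    have d0: "d 0 < \<delta>/6"
    proof -
      have "a 0 * (d 0)\<^sup>2 \<le> r 0" using H1r[of 0] rnn[of 1] unfolding r_def by simp
      also have "\<dots> < a_low * \<delta>^2/36" using rlt[of 0] \<eta>le by simp
      also have "\<dots> \<le> a 0 * \<delta>^2/36" using H3a by (intro divide_right_mono mult_right_mono) auto
      also have "\<dots> = a 0 * (\<delta>/6)^2" by (simp add: power_divide)
      finally have "(d 0)\<^sup>2 < (\<delta>/6)^2" using apos[of 0] by simp
      then show ?thesis by (rule power_less_imp_less_base) (use \<delta>pos in simp)
    qed
    have slopeb: "b (Suc N) \<le> \<phi>' (r (Suc N)) * d N"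
      if ball: "norm (x (Suc N) - xs) < \<delta>" and rp: "r (Suc N) > 0" for N
    proof -
      have "f xs < f (x (Suc N))" using Ffin[of "Suc N"] fs rp unfolding r_def by simp
      moreover have "f (x (Suc N)) < f xs + ereal \<eta>0"
        using Ffin[of "Suc N"] fs rlt[of "Suc N"] \<eta>le unfolding r_def by simp
      ultimately have "1 \<le> ereal (\<phi>' (real_of_ereal (f (x (Suc N)) - f xs))) * lazy_slope f (x (Suc N))"
        using KL ball by blast
      moreover have "real_of_ereal (f (x (Suc N)) - f xs) = r (Suc N)"
        using Ffin[of "Suc N"] fs unfolding r_def by simp
      ultimately have kl: "1 \<le> ereal (\<phi>' (r (Suc N))) * lazy_slope f (x (Suc N))" by simp
      have h2: "ereal (b (Suc N)) * lazy_slope f (x (Suc N)) \<le> ereal (d N)"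
        using H2 unfolding d_def by simp
      have "r (Suc N) \<in> {0<..<\<eta>0}" using rp rI[of "Suc N"] by auto
      then have "\<phi>' (r (Suc N)) > 0" using \<phi>der by blast
      then show ?thesis using ereal_kl_step[OF kl h2] H2 lazy_slope_nonneg by blast
    qed
    have step: "2 * d (Suc N) \<le> d N + M * (\<phi> (r (Suc N)) - \<phi> (r (Suc (Suc N))))"
      if ball: "norm (x (Suc N) - xs) < \<delta>" for N
    proof (cases "r (Suc N) = 0")
      case True
      then have rSS: "r (Suc (Suc N)) = 0" using rdec[of "Suc N"] rnn[of "Suc (Suc N)"] by simp
      have "a (Suc N) * (d (Suc N))\<^sup>2 \<le> 0"
        using H1r[of "Suc N"] True rSS unfolding r_def by simp
      moreover have "0 \<le> (d (Suc N))\<^sup>2" by simp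
      ultimately have "(d (Suc N))\<^sup>2 \<le> 0"
        using mult_pos_pos[of "a (Suc N)" "(d (Suc N))\<^sup>2"] apos[of "Suc N"]
        by (smt (verit) mult_le_0_iff)
      then have "d (Suc N) \<le> 0" using power2_le_imp_le[of "d (Suc N)" 0] by simp
      then show ?thesis using True rSS \<phi>0 dnn[of N] by simp
    next
      case False
      then have rp: "r (Suc N) > 0" using rnn[of "Suc N"] by simp
      define p where "p = \<phi>' (r (Suc N))"
      define A where "A = a (Suc N)"
      define Bb where "Bb = b (Suc N)"
      define u where "u = d (Suc N)"
      define v where "v = d N"
      define \<Delta> where "\<Delta> = \<phi> (r (Suc N)) - \<phi> (r (Suc (Suc N)))"
      have rS: "r (Suc N) \<in> {0<..<\<eta>0}" using rp rI[of "Suc N"] by auto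
      have pp: "p > 0" and der: "(\<phi> has_real_derivative p) (at (r (Suc N)))"
        using \<phi>der rS unfolding p_def by auto
      have Ap: "A > 0" unfolding A_def using apos by simp
      have Bp: "Bb > 0" unfolding Bb_def using H2 by simp
      have u0: "u \<ge> 0" and v0: "v \<ge> 0" unfolding u_def v_def using dnn by auto
      have bb: "Bb \<le> p * v" unfolding Bb_def p_def v_def using slopeb[OF ball rp] .
      have h1: "A * u\<^sup>2 \<le> r (Suc N) - r (Suc (Suc N))"
        using H1r[of "Suc N"] unfolding A_def u_def r_def by simp
      have tan: "\<phi> (r (Suc (Suc N))) \<le> \<phi> (r (Suc N)) + p * (r (Suc (Suc N)) - r (Suc N))"
        using concave_tangent[OF \<phi>conc rS rI[of "Suc (Suc N)"] der] .
      then have tan': "p * (r (Suc N) - r (Suc (Suc N))) \<le> \<Delta>" unfolding \<Delta>_def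
        by (simp add: algebra_simps)
      have Au0: "0 \<le> A * u\<^sup>2" using Ap by simp
      have t1: "p * (A * u\<^sup>2) \<le> \<Delta>"
        using mult_left_mono[OF h1, of p] pp tan' by linarith
      have D0: "\<Delta> \<ge> 0" using t1 pp Au0 by (smt (verit) mult_nonneg_nonneg)
      have "A * Bb * u\<^sup>2 = Bb * (A * u\<^sup>2)" by simp
      also have "\<dots> \<le> (p * v) * (A * u\<^sup>2)" using mult_right_mono[OF bb Au0] .
      also have "\<dots> = v * (p * (A * u\<^sup>2))" by simp
      also have "\<dots> \<le> v * \<Delta>" using mult_left_mono[OF t1 v0] .
      finally have t2: "A * Bb * u\<^sup>2 \<le> v * \<Delta>" .
      have "1 / (A * Bb) \<le> M" using H3c unfolding A_def Bb_def by simp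
      then have t3: "1 \<le> M * (A * Bb)" using Ap Bp by (simp add: field_simps)
      have "u\<^sup>2 = 1 * u\<^sup>2" by simp
      also have "\<dots> \<le> (M * (A * Bb)) * u\<^sup>2" using mult_right_mono[OF t3] by simp
      also have "\<dots> = M * (A * Bb * u\<^sup>2)" by simp
      also have "\<dots> \<le> M * (v * \<Delta>)" using mult_left_mono[OF t2] assms(6) by simp
      also have "\<dots> = v * (M * \<Delta>)" by simp
      finally have "u\<^sup>2 \<le> v * (M * \<Delta>)" .
      then have "2 * u \<le> v + M * \<Delta>" using amgm_step u0 v0 D0 assms(6) by simp
      then show ?thesis unfolding u_def v_def \<Delta>_def .
    qed
    define B where "B = d 0 + M * \<phi> (r 1)"
    have ballfrom: "norm (x (Suc m) - xs) < \<delta>" if "(\<Sum>k<m. d (Suc k)) \<le> B" for m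
    proof -
      have "x (Suc m) - x 0 = (\<Sum>k<Suc m. x (Suc k) - x k)" by (simp add: sum_lessThan_telescope)
      then have "norm (x (Suc m) - x 0) \<le> (\<Sum>k<Suc m. d k)" unfolding d_def
        by (metis norm_sum)
      also have "\<dots> = d 0 + (\<Sum>k<m. d (Suc k))" by (simp only: sum.lessThan_Suc_shift)
      finally have n1: "norm (x (Suc m) - x 0) \<le> d 0 + B" using that by simp
      have "norm (x (Suc m) - xs) \<le> norm (x 0 - xs) + norm (x (Suc m) - x 0)"
        using norm_triangle_ineq[of "x 0 - xs" "x (Suc m) - x 0"] by simp
      moreover have "M * \<phi> (r 1) < M * (\<delta>/(3*M))" using \<phi>sm[of 1] assms(6) by (intro mult_strict_left_mono) auto
      moreover have "M * (\<delta>/(3*M)) = \<delta>/3" using assms(6) by simp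
      ultimately show ?thesis using n1 x0n d0 unfolding B_def by linarith
    qed
    have inv: "(\<Sum>k<m. d (Suc k)) + d m + M * \<phi> (r (Suc m)) \<le> B" for m
    proof (induction m)
      case 0
      then show ?case unfolding B_def by simp
    next
      case (Suc m)
      have "0 \<le> M * \<phi> (r (Suc m))" using \<phi>nnk assms(6) by simp
      then have "(\<Sum>k<m. d (Suc k)) \<le> B" using Suc dnn[of m] by linarith
      then have "2 * d (Suc m) \<le> d m + M * (\<phi> (r (Suc m)) - \<phi> (r (Suc (Suc m))))"
        using step ballfrom by blast
      then show ?case using Suc by (simp add: algebra_simps)
    qed
    have ball: "norm (x k - xs) < \<delta>" for k
    proof (cases k)
      case 0 then show ?thesis using x0n \<delta>pos by simp
    next
      case (Suc m)
      have "0 \<le> M * \<phi> (r (Suc m))" using \<phi>nnk assms(6) by simp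
      then have "(\<Sum>k<m. d (Suc k)) \<le> B" using inv[of m] dnn[of m] by linarith
      then show ?thesis using ballfrom Suc by blast
    qed
    have sumd: "summable d"
    proof (rule bounded_imp_summable)
      show "0 \<le> d n" for n by (rule dnn)
      fix n
      have "(\<Sum>k\<le>n. d k) = d 0 + (\<Sum>k<n. d (Suc k))"
        by (simp only: lessThan_Suc_atMost[symmetric] sum.lessThan_Suc_shift)
      also have "\<dots> \<le> d 0 + B"
        using inv[of n] dnn[of n] mult_nonneg_nonneg[OF less_imp_le[OF assms(6)] \<phi>nnk[of "Suc n"]] by simp
      finally show "(\<Sum>k\<le>n. d k) \<le> d 0 + B" .
    qed
    have distle: "dist (x m) (x n) \<le> sum d {m..<n}" if "m \<le> n" for m n
    proof -
      have "x n - x m = (\<Sum>i=m..<n. x (Suc i) - x i)" using sum_Suc_diff'[OF that, of x] by simp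
      then have "norm (x n - x m) \<le> sum d {m..<n}" unfolding d_def by (metis norm_sum)
      then show ?thesis by (simp add: dist_norm norm_minus_commute)
    qed
    have "Cauchy x"
    proof (rule metric_CauchyI)
      fix \<epsilon> :: real assume "\<epsilon> > 0"
      then obtain N where N: "\<forall>m\<ge>N. \<forall>n. norm (sum d {m..<n}) < \<epsilon>"
        using sumd unfolding summable_Cauchy by blast
      have "dist (x m) (x n) < \<epsilon>" if "m \<ge> N" "n \<ge> N" for m n
      proof (cases "m \<le> n")
        case True
        have "norm (sum d {m..<n}) < \<epsilon>" using N that by blast
        then show ?thesis using distle[OF True] abs_ge_self[of "sum d {m..<n}"] by simp
      next
        case False
        have "norm (sum d {n..<m}) < \<epsilon>" using N that by blast
        then show ?thesis using distle[of n m] False abs_ge_self[of "sum d {n..<m}"]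
          by (simp add: dist_commute)
      qed
      then show "\<exists>N. \<forall>m\<ge>N. \<forall>n\<ge>N. dist (x m) (x n) < \<epsilon>" by blast
    qed
    then obtain xbar where xlim: "x \<longlonglongrightarrow> xbar" using Cauchy_convergent convergent_def by blast
    obtain L where rlim: "r \<longlonglongrightarrow> L" and Lle: "\<forall>i. L \<le> r i"
      using decseq_convergent[OF rdecseq, of 0] rnn by blast
    have L0: "L \<ge> 0" using rlim rnn by (intro LIMSEQ_le_const) auto
    have "L = 0"
    proof (rule ccontr)
      assume "L \<noteq> 0"
      then have Lp: "L > 0" using L0 by simp
      have sub: "{L..r 1} \<subseteq> {0<..<\<eta>0}" using Lp rlt[of 1] \<eta>le by auto
      have cp: "compact (\<phi>' ` {L..r 1})"
        by (rule compact_continuous_image) (use continuous_on_subset[OF \<phi>'cont sub] in auto)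
      then obtain C where C: "\<forall>y\<in>\<phi>' ` {L..r 1}. norm y \<le> C"
        using compact_imp_bounded[OF cp] unfolding bounded_iff by blast
      have bC: "norm (b (Suc k)) \<le> C * d k" for k
      proof -
        have rk: "r (Suc k) \<in> {L..r 1}" using Lle rle[of 1 "Suc k"] by auto
        have "r (Suc k) > 0" using Lle Lp by (meson less_le_trans)
        then have "b (Suc k) \<le> \<phi>' (r (Suc k)) * d k" using slopeb ball by blast
        also have "\<dots> \<le> C * d k" using C rk dnn[of k] by (intro mult_right_mono) force+
        moreover have "b (Suc k) > 0" using H2 by blast
        ultimately show ?thesis by simp
      qed
      have "summable (\<lambda>k. C * d k)" using sumd by (rule summable_mult)
      then have "summable (\<lambda>k. b (Suc k))" by (rule summable_comparison_test') (use bC in blast)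
      then have "summable b" by (simp add: summable_Suc_iff)
      then show False using H3b by simp
    qed
    then have "F \<longlonglongrightarrow> fs" using tendsto_add[OF rlim tendsto_const[of fs]] unfolding r_def by simp
    then have "(\<lambda>k. ereal (F k)) \<longlonglongrightarrow> ereal fs" by (simp add: lim_ereal)
    then have flim: "(\<lambda>k. f (x k)) \<longlonglongrightarrow> f xs" using Ffin fs by simp
    have "f xbar \<le> f xs"
    proof (rule dense_le)
      fix c assume c: "c < f xbar"
      then have "c < Liminf (at xbar) f" using assms(2) unfolding lsc_fun_def by (meson less_le_trans)
      then have "eventually (\<lambda>y. f y > c) (at xbar)" by (rule less_LiminfD)
      then obtain dd where dd: "dd > 0" "\<forall>y. y \<noteq> xbar \<and> dist y xbar < dd \<longrightarrow> c < f y"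
        unfolding eventually_at by auto
      have "eventually (\<lambda>k. dist (x k) xbar < dd) sequentially" using xlim dd(1) by (rule tendstoD)
      then have "eventually (\<lambda>k. c \<le> f (x k)) sequentially"
      proof eventually_elim
        case (elim k)
        then show ?case using dd c by (cases "x k = xbar") (auto intro: less_imp_le)
      qed
      then show "c \<le> f xs" using flim by (intro LIMSEQ_le_const) (auto simp: eventually_sequentially)
    qed
    then have eq: "f xbar = f xs" using assms(3) unfolding global_min_def by (simp add: antisym)
    have "global_min f xbar" using assms(3) eq unfolding global_min_def by simp
    moreover have "summable (\<lambda>k. norm (x (Suc k) - x k))" using sumd unfolding d_def .
    ultimately show ?thesis using xlim flim eq by auto
  qed
  show ?thesis
    apply (rule exI[of _ "\<delta>/3"], rule conjI)
     apply (simp add: \<delta>pos)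
    apply (rule exI[of _ \<eta>], rule conjI)
     apply (rule \<eta>pos)
    apply (intro allI impI)
    apply (elim conjE)
    apply (rule key)
         apply assumption+
    done
qed

end
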